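(* For $n\ge3$, the priority lattice $\Pi(n)$ is not self-dual (it is not isomorphic to its order dual).
   Context: $[n]_0=\{0,\dots,n\}$. A priority forest on $[n]_0$ is a rooted forest with vertex set $[n]_0$ whose component trees $T_0,T_1,\dots$ are increasing (each non-root vertex has a larger label than its parent) and satisfy: for $j<k$ every label of $T_j$ is smaller than every label of $T_k$. The priority lattice $\Pi(n)$ is the set of priority forests on $[n]_0$, ordered by $P\le P'$ iff $E(P)\subseteq E(P')$, together with an extra element $\hat1$ greater than all priority forests. *)

theory Defs
  imports Main
begin

text \<open>A rooted forest on the vertex set {0..n} is represented by its set of edges,
  each edge written as (parent, child).  The forest is determined by its edge set
  (in an increasing tree the root is its minimum vertex).\<close>

definition pf_conn :: "(nat \<times> nat) set \<Rightarrow> nat \<Rightarrow> nat \<Rightarrow> bool" where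
  "pf_conn E x y \<longleftrightarrow> (x, y) \<in> (E \<union> E\<inverse>)\<^sup>*"

definition priority_forest :: "nat \<Rightarrow> (nat \<times> nat) set \<Rightarrow> bool" where
  "priority_forest n E \<longleftrightarrow>
     E \<subseteq> {0..n} \<times> {0..n} \<and>
     (\<forall>(p, c) \<in> E. p < c) \<and>
     (\<forall>p p' c. (p, c) \<in> E \<and> (p', c) \<in> E \<longrightarrow> p = p') \<and>
     (\<forall>x\<in>{0..n}. \<forall>y\<in>{0..n}. \<forall>u\<in>{0..n}. \<forall>v\<in>{0..n}.
        pf_conn E x y \<and> pf_conn E u v \<and> \<not> pf_conn E x u \<and> x < u \<longrightarrow> y < v)"

text \<open>Elements of the priority lattice: Some E for a priority forest E, None for the top.\<close>

definition priority_lattice :: "nat \<Rightarrow> (nat \<times> nat) set option set" where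
  "priority_lattice n = Some ` {E. priority_forest n E} \<union> {None}"

fun pl_le :: "(nat \<times> nat) set option \<Rightarrow> (nat \<times> nat) set option \<Rightarrow> bool" where
  "pl_le _ None = True"
| "pl_le None (Some F) = False"
| "pl_le (Some E) (Some F) = (E \<subseteq> F)"

definition pl_self_dual :: "nat \<Rightarrow> bool" where
  "pl_self_dual n \<longleftrightarrow> (\<exists>f. bij_betw f (priority_lattice n) (priority_lattice n) \<and>
     (\<forall>x\<in>priority_lattice n. \<forall>y\<in>priority_lattice n. pl_le x y \<longleftrightarrow> pl_le (f y) (f x)))"

end

theory Submission
  imports Defs
begin

lemma rt_mono:
  assumes "\<forall>(p, c) \<in> E. p < (c::nat)" and "(a, b) \<in> E\<^sup>*"
  shows "a \<le> b"
  using assms(2)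
proof (induction rule: rtrancl_induct)
  case base then show ?case by simp
next
  case (step y z) then show ?case using assms(1) by fastforce
qed

lemma desc:
  assumes up: "\<forall>p p' c. (p, c) \<in> E \<and> (p', c) \<in> E \<longrightarrow> p = p'"
    and nr: "\<forall>p. (p, r) \<notin> E" and "(r, x) \<in> (E \<union> E\<inverse>)\<^sup>*"
  shows "(r, x) \<in> E\<^sup>*"
  using assms(3)
proof (induction rule: rtrancl_induct)
  case base then show ?case by simp
next
  case (step x y)
  show ?case
  proof (cases "(x, y) \<in> E")
    case True then show ?thesis using step by (meson rtrancl_into_rtrancl)
  next
    case False
    then have yx: "(y, x) \<in> E" using step by auto
    from step.IH show ?thesis
    proof (cases rule: rtranclE)
      case base then show ?thesis using nr yx by auto
    next
      case (step z)
      then have "z = y" using up yx by blast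
      then show ?thesis using step by simp
    qed
  qed
qed

lemma atom_form:
  assumes pf: "priority_forest n E" and ne: "E \<noteq> {}"
  shows "\<exists>p<n. (p, Suc p) \<in> E"
proof -
  have sub: "E \<subseteq> {0..n} \<times> {0..n}" using pf unfolding priority_forest_def by (elim conjE)
  have inc: "\<forall>(p, c) \<in> E. p < c" using pf unfolding priority_forest_def by (elim conjE)
  have up: "\<forall>p p' c. (p, c) \<in> E \<and> (p', c) \<in> E \<longrightarrow> p = p'"
    using pf unfolding priority_forest_def by (elim conjE)
  have iv: "\<forall>x\<in>{0..n}. \<forall>y\<in>{0..n}. \<forall>u\<in>{0..n}. \<forall>v\<in>{0..n}.
        pf_conn E x y \<and> pf_conn E u v \<and> \<not> pf_conn E x u \<and> x < u \<longrightarrow> y < v"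
    using pf unfolding priority_forest_def by (elim conjE)
  define p where "p = (LEAST p. \<exists>c. (p, c) \<in> E)"
  have ex: "\<exists>p c. (p, c) \<in> E" using ne by auto
  have "\<exists>c. (p, c) \<in> E" unfolding p_def using ex by (rule LeastI_ex)
  then obtain c where pc: "(p, c) \<in> E" by blast
  have pmin: "\<And>q d. (q, d) \<in> E \<Longrightarrow> p \<le> q" unfolding p_def by (metis Least_le)
  have pcl: "p < c" "c \<le> n" using pc inc sub by auto
  show ?thesis
  proof (cases "\<exists>q. (q, Suc p) \<in> E")
    case True
    then obtain q where q: "(q, Suc p) \<in> E" by auto
    then have "q < Suc p" using inc by auto
    moreover have "p \<le> q" using pmin q by blast
    ultimately have "q = p" by simp
    then show ?thesis using q pcl by (intro exI[of _ p]) auto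
  next
    case False
    then have "Suc p \<noteq> c" using pc by auto
    then have lt: "Suc p < c" using pcl by simp
    have cpc: "pf_conn E p c" unfolding pf_conn_def using pc by auto
    have css: "pf_conn E (Suc p) (Suc p)" unfolding pf_conn_def by auto
    have "pf_conn E p (Suc p)"
    proof (rule ccontr)
      assume "\<not> pf_conn E p (Suc p)"
      moreover have "p \<in> {0..n}" "c \<in> {0..n}" "Suc p \<in> {0..n}" using pcl lt by auto
      ultimately have "c < Suc p" using iv cpc css by blast
      then show False using lt by simp
    qed
    then have "(Suc p, p) \<in> (E \<union> E\<inverse>)\<^sup>*" unfolding pf_conn_def
      by (metis converse_Un converse_converse rtrancl_converseI sup_commute)
    then have "(Suc p, p) \<in> E\<^sup>*" using desc[OF up] False by blast
    then have "Suc p \<le> p" using rt_mono inc by blast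
    then show ?thesis by simp
  qed
qed

lemma single_conn:
  "pf_conn {(p, Suc p)} x y \<longleftrightarrow> x = y \<or> (x = p \<and> y = Suc p) \<or> (x = Suc p \<and> y = p)"
proof
  assume "pf_conn {(p, Suc p)} x y"
  then have "(x, y) \<in> ({(p, Suc p)} \<union> {(p, Suc p)}\<inverse>)\<^sup>*" unfolding pf_conn_def .
  then show "x = y \<or> (x = p \<and> y = Suc p) \<or> (x = Suc p \<and> y = p)"
    by (induction rule: rtrancl_induct) auto
next
  assume "x = y \<or> (x = p \<and> y = Suc p) \<or> (x = Suc p \<and> y = p)"
  then show "pf_conn {(p, Suc p)} x y" unfolding pf_conn_def by auto
qed

lemma single_forest:
  assumes "p < n" shows "priority_forest n {(p, Suc p)}"
  using assms unfolding priority_forest_def single_conn by auto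

lemma empty_forest: "priority_forest n {}"
  unfolding priority_forest_def pf_conn_def by auto

definition tree_of :: "nat \<Rightarrow> (nat \<Rightarrow> nat) \<Rightarrow> (nat \<times> nat) set" where
  "tree_of n f = {(f c, c) | c. c \<in> {1..n}}"

lemma tree_conn0:
  assumes "\<forall>c\<in>{1..n}. f c < c"
  shows "x \<le> n \<Longrightarrow> pf_conn (tree_of n f) 0 x"
proof (induction x rule: less_induct)
  case (less x)
  show ?case
  proof (cases "x = 0")
    case True then show ?thesis unfolding pf_conn_def by simp
  next
    case False
    then have x1: "x \<in> {1..n}" using less by auto
    then have "f x < x" using assms by auto
    then have "pf_conn (tree_of n f) 0 (f x)" using less by simp
    moreover have "(f x, x) \<in> tree_of n f" using x1 unfolding tree_of_def by auto
    ultimately show ?thesis unfolding pf_conn_def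
      by (meson UnI1 rtrancl.rtrancl_into_rtrancl)
  qed
qed

lemma tree_conn:
  assumes "\<forall>c\<in>{1..n}. f c < c" "x \<le> n" "y \<le> n"
  shows "pf_conn (tree_of n f) x y"
proof -
  have a: "(0, x) \<in> (tree_of n f \<union> (tree_of n f)\<inverse>)\<^sup>*"
    using tree_conn0[OF assms(1) assms(2)] unfolding pf_conn_def .
  have b: "(0, y) \<in> (tree_of n f \<union> (tree_of n f)\<inverse>)\<^sup>*"
    using tree_conn0[OF assms(1) assms(3)] unfolding pf_conn_def .
  have "(x, 0) \<in> (tree_of n f \<union> (tree_of n f)\<inverse>)\<^sup>*"
    using a by (metis converse_Un converse_converse rtrancl_converseI sup_commute)
  then show ?thesis using b unfolding pf_conn_def by (meson rtrancl_trans)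
qed

lemma tree_forest:
  assumes "\<forall>c\<in>{1..n}. f c < c"
  shows "priority_forest n (tree_of n f)"
  unfolding priority_forest_def
proof (intro conjI)
  show "tree_of n f \<subseteq> {0..n} \<times> {0..n}" using assms unfolding tree_of_def by fastforce
  show "\<forall>(p, c) \<in> tree_of n f. p < c" using assms unfolding tree_of_def by auto
  show "\<forall>p p' c. (p, c) \<in> tree_of n f \<and> (p', c) \<in> tree_of n f \<longrightarrow> p = p'"
    unfolding tree_of_def by auto
  show "\<forall>x\<in>{0..n}. \<forall>y\<in>{0..n}. \<forall>u\<in>{0..n}. \<forall>v\<in>{0..n}. pf_conn (tree_of n f) x y \<and>
    pf_conn (tree_of n f) u v \<and> \<not> pf_conn (tree_of n f) x u \<and> x < u \<longrightarrow> y < v"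
    using tree_conn[OF assms] by auto
qed

lemma tree_max:
  assumes "priority_forest n F" "tree_of n f \<subseteq> F"
  shows "F = tree_of n f"
proof
  show "F \<subseteq> tree_of n f"
  proof
    fix e assume e: "e \<in> F"
    obtain p c where pc: "e = (p, c)" by (cases e)
    have "p < c" "c \<le> n" using assms(1) e pc unfolding priority_forest_def by auto
    then have c1: "c \<in> {1..n}" by auto
    then have "(f c, c) \<in> F" using assms(2) unfolding tree_of_def by auto
    then have "p = f c" using assms(1) e pc unfolding priority_forest_def by blast
    then show "e \<in> tree_of n f" using pc c1 unfolding tree_of_def by auto
  qed
qed (use assms in auto)

lemma tree_inj:
  assumes "tree_of n f = tree_of n g" "c \<in> {1..n}"
  shows "f c = g c"
proof -
  have "(f c, c) \<in> tree_of n g" using assms unfolding tree_of_def by auto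
  then show ?thesis unfolding tree_of_def by auto
qed

definition FF :: "nat \<Rightarrow> nat \<Rightarrow> nat" where
  "FF k c = (if k = 0 then (if c = 3 then 1 else 0) else (if c \<le> k then c - 1 else 0))"

lemma FF_lt: "c \<in> {1..n} \<Longrightarrow> FF k c < c"
  unfolding FF_def by auto

lemma FF_inj:
  assumes "n \<ge> 3" shows "inj_on (\<lambda>k. tree_of n (FF k)) {0..n}"
proof (rule inj_onI)
  fix j k assume j: "j \<in> {0..n}" and k: "k \<in> {0..n}" and eq: "tree_of n (FF j) = tree_of n (FF k)"
  show "j = k"
  proof (rule ccontr)
    assume ne: "j \<noteq> k"
    have "\<exists>c\<in>{1..n}. FF j c \<noteq> FF k c"
    proof (cases "j = 0 \<or> k = 0")
      case True
      then show ?thesis using ne assms by (intro bexI[of _ 3]) (auto simp: FF_def)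
    next
      case False
      show ?thesis
      proof (cases "j < k")
        case True
        then show ?thesis using False k by (intro bexI[of _ k]) (auto simp: FF_def)
      next
        case False': False
        then have "k < j" using ne by simp
        then show ?thesis using False j by (intro bexI[of _ j]) (auto simp: FF_def)
      qed
    qed
    then show False using tree_inj[OF eq] by blast
  qed
qed

theorem corollary5p2:
  fixes n :: nat
  assumes "n \<ge> 3"
  shows "\<not> pl_self_dual n"
proof
  assume "pl_self_dual n"
  then obtain \<phi> where bij: "bij_betw \<phi> (priority_lattice n) (priority_lattice n)"
    and iso: "\<forall>x\<in>priority_lattice n. \<forall>y\<in>priority_lattice n. pl_le x y \<longleftrightarrow> pl_le (\<phi> y) (\<phi> x)"
    unfolding pl_self_dual_def by blast
  let ?L = "priority_lattice n"
  have memL: "\<And>E. Some E \<in> ?L \<longleftrightarrow> priority_forest n E" unfolding priority_lattice_def by auto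
  have NL: "None \<in> ?L" unfolding priority_lattice_def by auto
  have BL: "Some {} \<in> ?L" using memL empty_forest by auto
  have inj: "inj_on \<phi> ?L" and img: "\<phi> ` ?L = ?L" using bij unfolding bij_betw_def by auto
  obtain z where z: "z \<in> ?L" "\<phi> z = Some {}" using BL img by (metis imageE)
  have "pl_le (\<phi> None) (\<phi> z)" using iso z NL by (metis pl_le.simps(1))
  moreover have "\<phi> None \<in> ?L" using NL img by auto
  ultimately have phiN: "\<phi> None = Some {}" using z
    by (cases "\<phi> None") auto
  define A where "A = (\<lambda>p. Some {(p, Suc p)}) ` {..<n}"
  define C where "C = (\<lambda>k. Some (tree_of n (FF k))) ` {0..n}"
  have coat: "\<phi> c \<in> A" if cC: "c \<in> C" for c
  proof -
    obtain k where c: "c = Some (tree_of n (FF k))" using cC unfolding C_def by auto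
    have cf: "priority_forest n (tree_of n (FF k))" using tree_forest FF_lt by blast
    have cL: "c \<in> ?L" using c cf memL by auto
    have cmax: "\<And>y. y \<in> ?L \<Longrightarrow> pl_le c y \<Longrightarrow> y = c \<or> y = None"
    proof -
      fix y assume "y \<in> ?L" "pl_le c y"
      then show "y = c \<or> y = None" using c tree_max memL by (cases y) auto
    qed
    have ne: "\<phi> c \<noteq> Some {}"
    proof
      assume "\<phi> c = Some {}"
      then have "\<phi> c = \<phi> None" using phiN by simp
      then have "c = None" using inj cL NL by (simp add: inj_on_eq_iff)
      then show False using c by simp
    qed
    have "\<phi> c \<in> ?L" using cL img by auto
    moreover have "\<phi> c \<noteq> None"
    proof
      assume "\<phi> c = None"
      then have "pl_le c (Some {})" using iso cL BL by (metis pl_le.simps(1))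
      moreover have "(FF k 1, 1) \<in> tree_of n (FF k)" using assms unfolding tree_of_def by auto
      ultimately show False using c by auto
    qed
    ultimately obtain E where E: "\<phi> c = Some E" "priority_forest n E" using memL
      unfolding priority_lattice_def by auto
    then have "E \<noteq> {}" using ne by auto
    then obtain p where p: "p < n" "(p, Suc p) \<in> E" using atom_form E by blast
    let ?y = "Some {(p, Suc p)}"
    have yL: "?y \<in> ?L" using memL single_forest p by auto
    have le: "pl_le ?y (\<phi> c)" using E p by auto
    obtain w where w: "w \<in> ?L" "\<phi> w = ?y" using yL img by (metis imageE)
    have "pl_le c w" using iso w cL le by auto
    then have "w = c \<or> w = None" using cmax w by auto
    then have yc: "?y = \<phi> c" using w phiN by auto
    have "?y \<in> A" unfolding A_def using p(1) by blast
    then show ?thesis using yc by simp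
  qed
  have CL: "C \<subseteq> ?L"
  proof
    fix x assume "x \<in> C"
    then obtain k where "x = Some (tree_of n (FF k))" unfolding C_def by blast
    moreover have "priority_forest n (tree_of n (FF k))" using tree_forest FF_lt by blast
    ultimately show "x \<in> ?L" using memL by simp
  qed
  have injC: "inj_on (\<lambda>k. Some (tree_of n (FF k))) {0..n}"
    using FF_inj[OF assms] unfolding inj_on_def by blast
  have "card C = card {0..n}" unfolding C_def using injC by (rule card_image)
  then have cardC: "card C = Suc n" by simp
  have injP: "inj_on \<phi> C" using inj CL by (rule inj_on_subset)
  have c1: "card (\<phi> ` C) = card C" using injP by (rule card_image)
  have sA: "\<phi> ` C \<subseteq> A" using coat by blast
  have fA: "finite A" unfolding A_def by simp
  have cA: "card A \<le> n" unfolding A_def using card_image_le[of "{..<n}"] by simp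
  have "card (\<phi> ` C) \<le> card A" using fA sA by (rule card_mono)
  then show False using cardC c1 cA by linarith
qed

end
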